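(* Let $0<n<1$ and $f\in D_{HK}$. The Abel integral equation $$\frac{1}{\Gamma(n)}\int_a^x(x-t)^{n-1}\varphi(t)\,dt=f(x)\qquad (a\le x\le b),$$ i.e. $\mathcal{J}_a^n\varphi=f$, has a solution $\varphi\in D_{HK}$ if and only if $\mathcal{J}_a^{1-n}f\in C[a,b]$ and $\mathcal{J}_a^{1-n}f(a)=0$.
   Context: Fix real numbers $a<b$. Let $C_0=\{F\in C[a,b]:F(a)=0\}$. A distribution $f$ on $(a,b)$ is Henstock–Kurzweil integrable if $f=F'$ (distributional derivative) for some (unique) $F\in C_0$; its integral is $\int_c^d f=F(d)-F(c)$. $D_{HK}$ is the space of these with the Alexiewicz norm $\|f\|_A=\sup_{[a,b]}|F|$; $L^1[a,b]$ is dense in it. Riemann–Liouville fractional integral on $D_{HK}$: for $m\ge1$, $\mathcal{J}_a^mf(x)=\frac{1}{\Gamma(m)}\int_a^x(x-t)^{m-1}f(t)\,dt$; for $0<m<1$, $\mathcal{J}_a^mf(x)=\frac{1}{\Gamma(m)}\lim_{k}\int_a^x(x-t)^{m-1}f_k(t)\,dt$ with $(f_k)\subset L^1[a,b]$, $\|f_k-f\|_A\to0$. In the Abel equation the left-hand side is understood as $\mathcal{J}_a^n\varphi$. *)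

theory Defs
  imports "HOL-Analysis.Analysis"
begin

text \<open>An element f of D_HK on (a,b) is represented by its unique primitive
  F in C_0 = {F in C[a,b] : F(a) = 0}, i.e. f = F' in the distributional sense.\<close>

definition C0 :: "real \<Rightarrow> real \<Rightarrow> (real \<Rightarrow> real) set" where
  "C0 a b = {F. continuous_on {a..b} F \<and> F a = 0}"

text \<open>Sup norm on [a,b]; applied to a difference of primitives it is the Alexiewicz norm.\<close>
definition supnorm :: "real \<Rightarrow> real \<Rightarrow> (real \<Rightarrow> real) \<Rightarrow> real" where
  "supnorm a b F = (SUP x\<in>{a..b}. \<bar>F x\<bar>)"

definition prim :: "real \<Rightarrow> (real \<Rightarrow> real) \<Rightarrow> real \<Rightarrow> real" where
  "prim a g = (\<lambda>x. integral {a..x} g)"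

definition RL :: "real \<Rightarrow> real \<Rightarrow> (real \<Rightarrow> real) \<Rightarrow> real \<Rightarrow> real" where
  "RL a m g x = (1 / Gamma m) * integral {a..x} (\<lambda>t. (x - t) powr (m - 1) * g t)"

text \<open>Riemann--Liouville integral J_a^m on D_HK for 0 < m < 1, in the primitive
  representation: HKJ a b m F is the primitive G (in C_0, normalised to 0 outside [a,b])
  of J_a^m f, where f = F', defined as the Alexiewicz-norm limit of J_a^m f_k for every
  sequence f_k in L^1[a,b] converging to f in the Alexiewicz norm.\<close>
definition HKJ :: "real \<Rightarrow> real \<Rightarrow> real \<Rightarrow> (real \<Rightarrow> real) \<Rightarrow> real \<Rightarrow> real" where
  "HKJ a b m F = (THE G. G \<in> C0 a b \<and> (\<forall>x. x \<notin> {a..b} \<longrightarrow> G x = 0) \<and>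
     (\<forall>fk :: nat \<Rightarrow> real \<Rightarrow> real.
        (\<forall>k. fk k absolutely_integrable_on {a..b}) \<and>
        (\<lambda>k. supnorm a b (\<lambda>x. prim a (fk k) x - F x)) \<longlonglongrightarrow> 0 \<longrightarrow>
        (\<lambda>k. supnorm a b (\<lambda>x. prim a (RL a m (fk k)) x - G x)) \<longlonglongrightarrow> 0))"

end

theory Submission
  imports Defs
begin


lemma beta_kernel:
  fixes t x al be :: real
  assumes "t < x" "0 < al" "0 < be"
  shows "((\<lambda>y. (x - y) powr (al - 1) * (y - t) powr (be - 1)) has_integral
          Beta al be * (x - t) powr (al + be - 1)) {t..x}"
proof -
  define g where "g = (\<lambda>s::real. s powr (be - 1) * (1 - s) powr (al - 1))"
  have g: "(g has_integral Beta be al) (cbox 0 1)"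
    using has_integral_Beta_real[OF assms(3,2)] by (simp add: g_def)
  have m: "1 / (x - t) > 0" using assms by simp
  have 1: "((\<lambda>y. g ((1 / (x - t)) *\<^sub>R y + (- t / (x - t)))) has_integral (Beta be al /\<^sub>R (1 / (x - t)) ^ DIM(real)))
     (cbox ((0 - (- t / (x - t))) /\<^sub>R (1 / (x - t))) ((1 - (- t / (x - t))) /\<^sub>R (1 / (x - t))))"
    by (rule has_integral_affinity'[OF g m])
  have f0: "(1 / (x - t)) *\<^sub>R y + (- t / (x - t)) = (y - t) / (x - t)" for y
    by (simp add: diff_divide_distrib)
  have f1: "(\<lambda>y. g ((1 / (x - t)) *\<^sub>R y + (- t / (x - t)))) = (\<lambda>y. g ((y - t) / (x - t)))"
    unfolding f0 ..
  have f2: "cbox ((0 - (- t / (x - t))) /\<^sub>R (1 / (x - t))) ((1 - (- t / (x - t))) /\<^sub>R (1 / (x - t))) = {t..x}"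
    using assms by (simp add: field_simps)
  have f3: "Beta be al /\<^sub>R (1 / (x - t)) ^ DIM(real) = Beta be al * (x - t)"
    by simp
  have 2: "((\<lambda>y. g ((y - t) / (x - t))) has_integral Beta be al * (x - t)) {t..x}"
    using 1 unfolding f1 f2 f3 .
  have 3: "((\<lambda>y. (x - t) powr (al + be - 2) * g ((y - t) / (x - t))) has_integral
       (x - t) powr (al + be - 2) * (Beta be al * (x - t))) {t..x}"
    by (rule has_integral_mult_right[OF 2])
  have eq: "(x - t) powr (al + be - 2) * g ((y - t) / (x - t)) = (x - y) powr (al - 1) * (y - t) powr (be - 1)"
    if "y \<in> {t..x}" for y
  proof -
    have "1 - (y - t) / (x - t) = (x - y) / (x - t)" using assms by (simp add: field_simps)
    then have "g ((y - t) / (x - t)) = ((y - t) powr (be - 1) / (x - t) powr (be - 1)) *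
                 ((x - y) powr (al - 1) / (x - t) powr (al - 1))"
      using that assms by (simp add: g_def powr_divide)
    moreover have "(x - t) powr (al + be - 2) = (x - t) powr (be - 1) * (x - t) powr (al - 1)"
      using assms by (simp add: powr_add[symmetric] add.commute)
    ultimately show ?thesis using assms by (simp add: field_simps)
  qed
  have v: "(x - t) powr (al + be - 2) * (Beta be al * (x - t)) = Beta al be * (x - t) powr (al + be - 1)"
  proof -
    have "(x - t) powr (al + be - 1) = (x - t) powr ((al + be - 2) + 1)" by (simp add: algebra_simps)
    also have "\<dots> = (x - t) powr (al + be - 2) * (x - t) powr 1" by (rule powr_add)
    also have "\<dots> = (x - t) powr (al + be - 2) * (x - t)" using assms by simp
    finally have "(x - t) powr (al + be - 1) = (x - t) powr (al + be - 2) * (x - t)" .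
    then show ?thesis using assms by (simp add: Beta_commute)
  qed
  have "((\<lambda>y. (x - y) powr (al - 1) * (y - t) powr (be - 1)) has_integral
      (x - t) powr (al + be - 2) * (Beta be al * (x - t))) {t..x}"
    by (rule has_integral_eq[OF _ 3]) (simp add: eq)
  then show ?thesis by (simp only: v)
qed

lemma AE_lborel_negligible:
  assumes "AE x in lborel. P (x::real)"
  obtains N where "negligible N" "\<And>x. x \<notin> N \<Longrightarrow> P x"
proof -
  from AE_E[OF assms] obtain N where N: "{x \<in> space lborel. \<not> P x} \<subseteq> N" "emeasure lborel N = 0" "N \<in> sets lborel"
    by blast
  have "N \<in> null_sets lborel" using N by auto
  then have "N \<in> null_sets lebesgue" using N(3) null_sets_completion_iff by blast
  then have "negligible N" by (simp add: negligible_iff_null_sets)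
  moreover have "\<And>x. x \<notin> N \<Longrightarrow> P x" using N(1) by auto
  ultimately show ?thesis using that by blast
qed

lemma has_integral_lborel_nonneg:
  fixes f :: "real \<Rightarrow> real"
  assumes "(f has_integral I) S" "\<And>x. x \<in> S \<Longrightarrow> 0 \<le> f x"
    and "(\<lambda>y. indicator S y * f y) \<in> borel_measurable borel"
  shows "integrable lborel (\<lambda>y. indicator S y * f y)" "integral\<^sup>L lborel (\<lambda>y. indicator S y * f y) = I"
proof -
  have "f absolutely_integrable_on S"
    using assms by (intro nonnegative_absolutely_integrable_1) auto
  have mb: "(\<lambda>y. indicator S y * f y) \<in> borel_measurable lborel" using assms(3) by simp
  from \<open>f absolutely_integrable_on S\<close> have li: "integrable lebesgue (\<lambda>y. indicator S y * f y)"
    by (simp add: set_integrable_def)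
  then show i: "integrable lborel (\<lambda>y. indicator S y * f y)"
    using integrable_completion[OF mb] by simp
  have "(LINT x:S | lebesgue. f x) = integral S f"
    using set_lebesgue_integral_eq_integral(2) \<open>f absolutely_integrable_on S\<close> by blast
  then have "integral\<^sup>L lebesgue (\<lambda>y. indicator S y * f y) = I"
    using assms(1) by (simp add: set_lebesgue_integral_def integral_unique)
  then show "integral\<^sup>L lborel (\<lambda>y. indicator S y * f y) = I"
    using integral_completion[OF mb] by simp
qed

lemma beta_kernel_lborel:
  fixes t x al be :: real
  assumes "t < x" "0 < al" "0 < be"
  shows "integrable lborel (\<lambda>y. indicator {t..x} y * ((x - y) powr (al - 1) * (y - t) powr (be - 1)))"
    "integral\<^sup>L lborel (\<lambda>y. indicator {t..x} y * ((x - y) powr (al - 1) * (y - t) powr (be - 1)))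
      = Beta al be * (x - t) powr (al + be - 1)"
  using has_integral_lborel_nonneg[OF beta_kernel[OF assms]] by (auto simp: measurable_lborel1)



lemma core_fubini:
  fixes h :: "real \<Rightarrow> real" and a x al be :: real
  assumes hb[measurable]: "h \<in> borel_measurable borel"
    and hi: "integrable lborel (\<lambda>t. indicator {a..x} t * h t)"
    and al: "0 < al" and be: "0 < be" and ab: "1 \<le> al + be"
  shows "((\<lambda>y. (x - y) powr (al - 1) * integral {a..y} (\<lambda>t. (y - t) powr (be - 1) * h t)) has_integral
          Beta al be * integral {a..x} (\<lambda>t. (x - t) powr (al + be - 1) * h t)) {a..x}"
proof -
  define B where "B = Beta al be"
  define ga where "ga = al + be - 1"
  have ga0: "0 \<le> ga" using ab by (simp add: ga_def)
  define kk where "kk = (\<lambda>t y::real. if a \<le> t \<and> t \<le> y \<and> y \<le> x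
      then (x - y) powr (al - 1) * (y - t) powr (be - 1) * h t else 0)"
  have kkm[measurable]: "case_prod kk \<in> borel_measurable (lborel \<Otimes>\<^sub>M lborel)"
    unfolding kk_def by measurable
  define R where "R = (\<lambda>t. indicator {a..x} t * ((x - t) powr ga * h t))"
  have Rm[measurable]: "R \<in> borel_measurable lborel" unfolding R_def by measurable
  have Ri: "integrable lborel R"
  proof (rule Bochner_Integration.integrable_bound[OF _ _ AE_I2])
    show "integrable lborel (\<lambda>t. (x - a) powr ga * norm (indicator {a..x} t * h t))"
      using hi by auto
    show "R \<in> borel_measurable lborel" by (rule Rm)
    fix t
    show "norm (R t) \<le> norm ((x - a) powr ga * norm (indicator {a..x} t * h t))"
    proof (cases "t \<in> {a..x}")
      case True
      then have "(x - t) powr ga \<le> (x - a) powr ga"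
        using ga0 by (intro powr_mono2) auto
      then show ?thesis using True by (auto simp: R_def abs_mult intro!: mult_right_mono)
    qed (auto simp: R_def)
  qed
  have sec_t: "integrable lborel (\<lambda>y. kk t y) \<and>
      integral\<^sup>L lborel (\<lambda>y. kk t y) = B * R t \<and>
      integral\<^sup>L lborel (\<lambda>y. norm (kk t y)) = B * norm (R t)" if "t \<noteq> x" for t
  proof cases
    assume t: "a \<le> t \<and> t < x"
    define K where "K = (\<lambda>y. indicator {t..x} y * ((x - y) powr (al - 1) * (y - t) powr (be - 1)))"
    have Ki: "integrable lborel K" and KI: "integral\<^sup>L lborel K = B * (x - t) powr ga"
      using beta_kernel_lborel[of t x al be] t al be by (auto simp: K_def B_def ga_def)
    have e1: "(\<lambda>y. kk t y) = (\<lambda>y. K y * h t)"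
      using t by (auto simp: kk_def K_def indicator_def fun_eq_iff)
    have e2: "(\<lambda>y. \<bar>K y * h t\<bar>) = (\<lambda>y. K y * \<bar>h t\<bar>)"
      by (auto simp: K_def indicator_def fun_eq_iff abs_mult)
    have "norm (R t) = (x - t) powr ga * \<bar>h t\<bar>" using t by (auto simp: R_def abs_mult)
    then show ?thesis using t Ki KI unfolding e1 by (auto simp: R_def e2)
  next
    assume t: "\<not> (a \<le> t \<and> t < x)"
    then have "(\<lambda>y. kk t y) = (\<lambda>y. 0)" by (auto simp: kk_def fun_eq_iff)
    moreover have "R t = 0" using t that by (auto simp: R_def)
    ultimately show ?thesis by simp
  qed
  have kint: "integrable (lborel \<Otimes>\<^sub>M lborel) (case_prod kk)"
  proof (rule lborel_pair.Fubini_integrable)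
    show "case_prod kk \<in> borel_measurable (lborel \<Otimes>\<^sub>M lborel)" by (rule kkm)
    show "integrable lborel (\<lambda>t. \<integral>y. norm (case_prod kk (t, y)) \<partial>lborel)"
    proof (rule integrable_cong_AE_imp[of lborel "\<lambda>t. B * norm (R t)"])
      show "integrable lborel (\<lambda>t. B * norm (R t))" using Ri by auto
      show "(\<lambda>t. \<integral>y. norm (case_prod kk (t, y)) \<partial>lborel) \<in> borel_measurable lborel"
        by measurable
      show "AE t in lborel. B * norm (R t) = (\<integral>y. norm (case_prod kk (t, y)) \<partial>lborel)"
        using AE_lborel_singleton[of x] by eventually_elim (use sec_t in auto)
    qed
    show "AE t in lborel. integrable lborel (\<lambda>y. case_prod kk (t, y))"
      using AE_lborel_singleton[of x] by eventually_elim (use sec_t in auto)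
  qed
  have fub: "(\<integral>y. (\<integral>t. kk t y \<partial>lborel) \<partial>lborel) = (\<integral>t. (\<integral>y. kk t y \<partial>lborel) \<partial>lborel)"
    by (rule lborel_pair.Fubini_integral[OF kint])
  have "(\<integral>t. (\<integral>y. kk t y \<partial>lborel) \<partial>lborel) = (\<integral>t. B * R t \<partial>lborel)"
    by (rule integral_cong_AE) (use AE_lborel_singleton[of x] sec_t in \<open>auto elim!: eventually_mono\<close>)
  also have "\<dots> = B * integral\<^sup>L lborel R" by simp
  also have "integral\<^sup>L lborel R = integral {a..x} (\<lambda>t. (x - t) powr ga * h t)"
  proof -
    have "set_integrable lborel {a..x} (\<lambda>t. (x - t) powr ga * h t)"
      using Ri by (simp add: set_integrable_def R_def)
    from set_borel_integral_eq_integral(2)[OF this] show ?thesis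
      by (simp add: set_lebesgue_integral_def R_def)
  qed
  finally have rhs: "(\<integral>t. (\<integral>y. kk t y \<partial>lborel) \<partial>lborel) = B * integral {a..x} (\<lambda>t. (x - t) powr ga * h t)" .
  define F where "F = (\<lambda>y. \<integral>t. kk t y \<partial>lborel)"
  have Fi: "integrable lborel F"
    using lborel_pair.integrable_fst'[OF lborel_pair.integrable_product_swap[OF kint]]
    by (simp add: F_def case_prod_beta)
  have AEsnd: "AE y in lborel. integrable lborel (\<lambda>t. kk t y)"
    by (rule lborel_pair.AE_integrable_snd[OF kint])
  define G where "G = (\<lambda>y. if y \<in> {a..x} then (x - y) powr (al - 1) * integral {a..y} (\<lambda>t. (y - t) powr (be - 1) * h t) else 0)"
  have "AE y in lborel. F y = G y"
    using AEsnd AE_lborel_singleton[of x]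
  proof eventually_elim
    case (elim y)
    show ?case
    proof cases
      assume y: "y \<in> {a..x}"
      with elim have y': "a \<le> y" "y < x" by auto
      define p where "p = (x - y) powr (al - 1)"
      have p: "p > 0" using y' by (simp add: p_def)
      have e: "(\<lambda>t. kk t y) = (\<lambda>t. p * (indicator {a..y} t * ((y - t) powr (be - 1) * h t)))"
        using y' by (auto simp: kk_def p_def indicator_def fun_eq_iff)
      have "integrable lborel (\<lambda>t. indicator {a..y} t * ((y - t) powr (be - 1) * h t))"
        using elim(1) p unfolding e by simp
      then have si: "set_integrable lborel {a..y} (\<lambda>t. (y - t) powr (be - 1) * h t)"
        by (simp add: set_integrable_def)
      have "F y = p * integral\<^sup>L lborel (\<lambda>t. indicator {a..y} t * ((y - t) powr (be - 1) * h t))"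
        by (simp add: F_def e)
      also have "integral\<^sup>L lborel (\<lambda>t. indicator {a..y} t * ((y - t) powr (be - 1) * h t)) =
          integral {a..y} (\<lambda>t. (y - t) powr (be - 1) * h t)"
        using set_borel_integral_eq_integral(2)[OF si] by (simp add: set_lebesgue_integral_def)
      finally show ?thesis using y by (simp add: G_def p_def)
    next
      assume y: "y \<notin> {a..x}"
      then have "(\<lambda>t. kk t y) = (\<lambda>t. 0)" by (auto simp: kk_def fun_eq_iff)
      then show ?thesis using y by (auto simp add: F_def G_def)
    qed
  qed
  then obtain N where N: "negligible N" "\<And>y. y \<notin> N \<Longrightarrow> F y = G y"
    by (rule AE_lborel_negligible) blast
  have FI: "(F has_integral integral\<^sup>L lborel F) UNIV" by (rule has_integral_integral_lborel[OF Fi])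
  have "(G has_integral integral\<^sup>L lborel F) UNIV"
    by (rule has_integral_spike[OF N(1) _ FI]) (use N(2) in auto)
  then have "((\<lambda>y. (x - y) powr (al - 1) * integral {a..y} (\<lambda>t. (y - t) powr (be - 1) * h t))
      has_integral integral\<^sup>L lborel F) {a..x}"
    unfolding G_def has_integral_restrict_UNIV .
  moreover have "integral\<^sup>L lborel F = B * integral {a..x} (\<lambda>t. (x - t) powr ga * h t)"
    using fub rhs by (simp add: F_def)
  ultimately show ?thesis by (simp add: B_def ga_def)
qed



lemma RL_compose_raw:
  fixes h :: "real \<Rightarrow> real" and a x al be :: real
  assumes h: "h absolutely_integrable_on {a..x}"
    and al: "0 < al" and be: "0 < be" and ab: "1 \<le> al + be"
  shows "((\<lambda>y. (x - y) powr (al - 1) * integral {a..y} (\<lambda>t. (y - t) powr (be - 1) * h t)) has_integral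
          Beta al be * integral {a..x} (\<lambda>t. (x - t) powr (al + be - 1) * h t)) {a..x}"
proof -
  have li: "integrable lebesgue (\<lambda>t. indicator {a..x} t * h t)"
    using h by (simp add: set_integrable_def)
  then have "(\<lambda>t. indicator {a..x} t * h t) \<in> borel_measurable (completion lborel)"
    by auto
  from completion_ex_borel_measurable_real[OF this] obtain h' where
    h'b: "h' \<in> borel_measurable lborel" and ae: "AE t in lborel. indicator {a..x} t * h t = h' t"
    by blast
  have h'b2[measurable]: "h' \<in> borel_measurable borel" using h'b by simp
  have "h' \<in> borel_measurable lebesgue" using h'b by (rule measurable_completion)
  have "integrable lebesgue h'"
    by (rule integrable_cong_AE_imp[OF li \<open>h' \<in> borel_measurable lebesgue\<close> AE_completion[OF ae]])
  then have "integrable lborel h'" using integrable_completion[OF h'b] by simp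
  then have hi: "integrable lborel (\<lambda>t. indicator {a..x} t * h' t)"
    using integrable_real_mult_indicator[of "{a..x}" lborel h'] by (simp add: mult.commute)
  obtain N where N: "negligible N" "\<And>t. t \<notin> N \<Longrightarrow> indicator {a..x} t * h t = h' t"
    using AE_lborel_negligible[OF ae] by blast
  have eqI: "integral {a..y} (\<lambda>t. (y - t) powr c * h t) = integral {a..y} (\<lambda>t. (y - t) powr c * h' t)"
    if "y \<le> x" for y c
  proof (rule integral_spike[OF N(1)])
    fix t assume "t \<in> {a..y} - N"
    then have "h t = h' t" using N(2)[of t] that by (auto simp: indicator_def)
    then show "(y - t) powr c * h' t = (y - t) powr c * h t" by simp
  qed
  have main: "((\<lambda>y. (x - y) powr (al - 1) * integral {a..y} (\<lambda>t. (y - t) powr (be - 1) * h' t)) has_integral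
          Beta al be * integral {a..x} (\<lambda>t. (x - t) powr (al + be - 1) * h' t)) {a..x}"
    by (rule core_fubini[OF h'b2 hi al be ab])
  show ?thesis
    unfolding eqI[OF order_refl]
    by (rule has_integral_eq[OF _ main]) (simp add: eqI)
qed

lemma RL1:
  assumes "a \<le> x"
  shows "RL a 1 g x = integral {a..x} g"
proof -
  have "integral {a..x} (\<lambda>t. (x - t) powr (1 - 1) * g t) = integral {a..x} g"
    by (rule integral_spike[of "{x}"]) auto
  then show ?thesis by (simp add: RL_def)
qed

lemma RL_semigroup:
  fixes h :: "real \<Rightarrow> real"
  assumes h: "h absolutely_integrable_on {a..x}"
    and al: "0 < al" and be: "0 < be" and ab: "1 \<le> al + be"
  shows "RL a al (RL a be h) x = RL a (al + be) h x"
proof -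
  have e: "(\<lambda>y. (x - y) powr (al - 1) * RL a be h y) =
      (\<lambda>y. (1 / Gamma be) * ((x - y) powr (al - 1) * integral {a..y} (\<lambda>t. (y - t) powr (be - 1) * h t)))"
    by (auto simp: RL_def fun_eq_iff)
  have "integral {a..x} (\<lambda>y. (x - y) powr (al - 1) * RL a be h y) =
      (1 / Gamma be) * (Beta al be * integral {a..x} (\<lambda>t. (x - t) powr (al + be - 1) * h t))"
    unfolding e by (rule integral_unique[OF has_integral_mult_right[OF RL_compose_raw[OF h al be ab]]])
  moreover have "Gamma al > 0" "Gamma be > 0" "Gamma (al + be) > 0" using al be by auto
  ultimately show ?thesis by (simp add: RL_def Beta_def field_simps)
qed

lemma prim_RL:
  fixes h :: "real \<Rightarrow> real"
  assumes h: "h absolutely_integrable_on {a..x}" and ax: "a \<le> x" and m: "0 < m"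
  shows "prim a (RL a m h) x = RL a m (prim a h) x"
proof -
  have "prim a (RL a m h) x = RL a 1 (RL a m h) x" by (simp add: prim_def RL1[OF ax])
  also have "\<dots> = RL a (1 + m) h x" by (rule RL_semigroup[OF h]) (use m in auto)
  also have "\<dots> = RL a (m + 1) h x" by (simp add: add.commute)
  also have "\<dots> = RL a m (RL a 1 h) x" by (rule RL_semigroup[OF h, symmetric]) (use m in auto)
  also have "\<dots> = RL a m (prim a h) x"
  proof -
    have "integral {a..x} (\<lambda>y. (x - y) powr (m - 1) * RL a 1 h y) =
        integral {a..x} (\<lambda>y. (x - y) powr (m - 1) * prim a h y)"
      by (rule integral_cong) (simp add: RL1 prim_def)
    then show ?thesis unfolding RL_def[of a m _ x] by simp
  qed
  finally show ?thesis .
qed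

lemma RL_integrable:
  fixes h :: "real \<Rightarrow> real"
  assumes h: "h absolutely_integrable_on {a..x}" and m: "0 < m"
  shows "RL a m h integrable_on {a..x}"
proof -
  have "((\<lambda>y. (x - y) powr (1 - 1) * integral {a..y} (\<lambda>t. (y - t) powr (m - 1) * h t)) has_integral
          Beta 1 m * integral {a..x} (\<lambda>t. (x - t) powr (1 + m - 1) * h t)) {a..x}"
    by (rule RL_compose_raw[OF h]) (use m in auto)
  then have "(\<lambda>y. (x - y) powr (1 - 1) * integral {a..y} (\<lambda>t. (y - t) powr (m - 1) * h t)) integrable_on {a..x}"
    by blast
  then have "(\<lambda>y. integral {a..y} (\<lambda>t. (y - t) powr (m - 1) * h t)) integrable_on {a..x}"
    by (rule integrable_spike[OF _ negligible_sing[of x]]) auto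
  then show ?thesis unfolding RL_def[abs_def] by (rule integrable_on_mult_right)
qed



lemma kernel_has_integral:
  fixes a x m :: real
  assumes ax: "a < x" and m: "0 < m"
  shows "((\<lambda>t. (x - t) powr (m - 1)) has_integral (x - a) powr m / m) {a..x}"
proof -
  have 1: "((\<lambda>y. (x - y) powr (m - 1) * (y - a) powr (1 - 1)) has_integral
          Beta m 1 * (x - a) powr (m + 1 - 1)) {a..x}"
    by (rule beta_kernel) (use ax m in auto)
  have g: "Gamma (m + 1) = m * Gamma m" by (rule Gamma_plus1) (use m in auto)
  have "Gamma m > 0" using m by simp
  have "Beta m 1 = Gamma m / (m * Gamma m)" by (simp only: Beta_def g Gamma_1 mult_1_right)
  also have "\<dots> = 1 / m" using \<open>Gamma m > 0\<close> by simp
  finally have "Beta m 1 = 1 / m" .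
  then have 2: "((\<lambda>y. (x - y) powr (m - 1) * (y - a) powr (1 - 1)) has_integral (x - a) powr m / m) {a..x}"
    using 1 by simp
  show ?thesis
    by (rule has_integral_spike[OF negligible_sing[of a] _ 2]) auto
qed

lemma kernel_prod_abs_int:
  fixes a x m :: real and D :: "real \<Rightarrow> real"
  assumes D: "continuous_on {a..x} D" and ax: "a \<le> x" and m: "0 < m"
  shows "(\<lambda>t. (x - t) powr (m - 1) * D t) absolutely_integrable_on {a..x}"
proof (cases "a = x")
  case True
  then show ?thesis by (metis absolutely_integrable_on_def integrable_on_refl box_real(2))
next
  case False
  then have ax': "a < x" using ax by simp
  have k: "(\<lambda>t. (x - t) powr (m - 1)) absolutely_integrable_on {a..x}"
    using kernel_has_integral[OF ax' m] by (intro nonnegative_absolutely_integrable_1) auto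
  have "(\<lambda>t. D t * (x - t) powr (m - 1)) absolutely_integrable_on {a..x}"
  proof (rule absolutely_integrable_bounded_measurable_product_real[OF _ _ _ k])
    show "D \<in> borel_measurable (lebesgue_on {a..x})"
      by (rule continuous_imp_measurable_on_sets_lebesgue[OF D]) auto
    show "bounded (D ` {a..x})"
      by (rule compact_imp_bounded[OF compact_continuous_image[OF D]]) auto
  qed auto
  then show ?thesis by (simp add: mult.commute)
qed

lemma RL_bound:
  fixes a x m M :: real and D :: "real \<Rightarrow> real"
  assumes D: "continuous_on {a..x} D" and M: "\<And>t. t \<in> {a..x} \<Longrightarrow> \<bar>D t\<bar> \<le> M"
    and m: "0 < m" and ax: "a \<le> x"
  shows "\<bar>RL a m D x\<bar> \<le> M * (x - a) powr m / (m * Gamma m)"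
proof (cases "a = x")
  case True
  then show ?thesis by (simp add: RL_def)
next
  case False
  then have ax': "a < x" using ax by simp
  have M0: "0 \<le> M" using M[of a] ax by auto
  have kI: "((\<lambda>t. M * (x - t) powr (m - 1)) has_integral M * ((x - a) powr m / m)) {a..x}"
    by (rule has_integral_mult_right[OF kernel_has_integral[OF ax' m]])
  have "norm (integral {a..x} (\<lambda>t. (x - t) powr (m - 1) * D t)) \<le> integral {a..x} (\<lambda>t. M * (x - t) powr (m - 1))"
  proof (rule integral_norm_bound_integral)
    show "(\<lambda>t. (x - t) powr (m - 1) * D t) integrable_on {a..x}"
      using kernel_prod_abs_int[OF D ax m] by (simp add: absolutely_integrable_on_def)
    show "(\<lambda>t. M * (x - t) powr (m - 1)) integrable_on {a..x}" using kI by blast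
    fix t assume t: "t \<in> {a..x}"
    have "\<bar>D t\<bar> * (x - t) powr (m - 1) \<le> M * (x - t) powr (m - 1)"
      by (rule mult_right_mono[OF M[OF t]]) simp
    then show "norm ((x - t) powr (m - 1) * D t) \<le> M * (x - t) powr (m - 1)"
      by (simp add: abs_mult mult.commute)
  qed
  also have "\<dots> = M * ((x - a) powr m / m)" using kI by (rule integral_unique)
  finally have "\<bar>integral {a..x} (\<lambda>t. (x - t) powr (m - 1) * D t)\<bar> \<le> M * (x - a) powr m / m" by simp
  moreover have "Gamma m > 0" using m by simp
  ultimately have "\<bar>integral {a..x} (\<lambda>t. (x - t) powr (m - 1) * D t)\<bar> / Gamma m \<le> (M * (x - a) powr m / m) / Gamma m"
    by (intro divide_right_mono) auto
  moreover have "\<bar>RL a m D x\<bar> = \<bar>integral {a..x} (\<lambda>t. (x - t) powr (m - 1) * D t)\<bar> / Gamma m"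
    using \<open>Gamma m > 0\<close> by (simp add: RL_def abs_mult)
  ultimately show ?thesis by simp
qed

lemma RL_diff:
  assumes u: "continuous_on {a..x} u" and v: "continuous_on {a..x} v" and ax: "a \<le> x" and m: "0 < m"
  shows "RL a m u x - RL a m v x = RL a m (\<lambda>t. u t - v t) x"
proof -
  have iu: "(\<lambda>t. (x - t) powr (m - 1) * u t) integrable_on {a..x}"
    using kernel_prod_abs_int[OF u ax m] by (simp add: absolutely_integrable_on_def)
  have iv: "(\<lambda>t. (x - t) powr (m - 1) * v t) integrable_on {a..x}"
    using kernel_prod_abs_int[OF v ax m] by (simp add: absolutely_integrable_on_def)
  have eq: "integral {a..x} (\<lambda>t. (x - t) powr (m - 1) * (u t - v t)) =
      integral {a..x} (\<lambda>t. (x - t) powr (m - 1) * u t) - integral {a..x} (\<lambda>t. (x - t) powr (m - 1) * v t)"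
    using integral_diff[OF iu iv] by (simp add: algebra_simps)
  have "RL a m (\<lambda>t. u t - v t) x = 1 / Gamma m * (integral {a..x} (\<lambda>t. (x - t) powr (m - 1) * u t) - integral {a..x} (\<lambda>t. (x - t) powr (m - 1) * v t))"
    by (simp only: RL_def eq)
  then show ?thesis by (simp add: RL_def right_diff_distrib)
qed

lemma supnorm_ge:
  assumes M: "\<And>x. x \<in> {a..b} \<Longrightarrow> \<bar>D x\<bar> \<le> M" and x: "x \<in> {a..b}"
  shows "\<bar>D x\<bar> \<le> supnorm a b D"
  unfolding supnorm_def
  by (rule cSUP_upper[OF x]) (use M in \<open>auto intro!: bdd_aboveI2[where M=M]\<close>)

lemma supnorm_ge_cont:
  assumes "continuous_on {a..b} D" "x \<in> {a..b}"
  shows "\<bar>D x\<bar> \<le> supnorm a b D"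
proof -
  have "bounded (D ` {a..b})"
    by (rule compact_imp_bounded[OF compact_continuous_image[OF assms(1)]]) auto
  then obtain M where "\<And>x. x \<in> {a..b} \<Longrightarrow> \<bar>D x\<bar> \<le> M"
    unfolding bounded_iff by fastforce
  then show ?thesis using supnorm_ge assms(2) by blast
qed

lemma supnorm_le:
  assumes "a \<le> b" "\<And>x. x \<in> {a..b} \<Longrightarrow> \<bar>D x\<bar> \<le> M"
  shows "supnorm a b D \<le> M"
  unfolding supnorm_def using assms by (intro cSUP_least) auto

lemma approx_seq:
  assumes ab: "a \<le> b" and F: "continuous_on {a..b} F" and Fa: "F a = 0"
  obtains fk where "\<And>k. continuous_on {a..b} (fk k)"
    "\<And>k x. x \<in> {a..b} \<Longrightarrow> \<bar>prim a (fk k) x - F x\<bar> \<le> 2 / (real k + 1)"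
proof -
  have "\<exists>f. continuous_on {a..b} f \<and> (\<forall>x\<in>{a..b}. \<bar>prim a f x - F x\<bar> \<le> 2 / (real k + 1))" for k
  proof -
    have e: "0 < 1 / (real k + 1)" by simp
    obtain g where g: "polynomial_function g" "\<forall>x\<in>{a..b}. norm (F x - g x) < 1 / (real k + 1)"
      using Stone_Weierstrass_polynomial_function[OF compact_Icc F e] by blast
    obtain g' where g': "polynomial_function g'" "\<And>x. (g has_vector_derivative (g' x)) (at x)"
      using has_vector_derivative_polynomial_function[OF g(1)] by blast
    have "\<bar>prim a g' x - F x\<bar> \<le> 2 / (real k + 1)" if x: "x \<in> {a..b}" for x
    proof -
      have "(g' has_integral (g x - g a)) {a..x}"
        by (rule fundamental_theorem_of_calculus) (use x g'(2) in \<open>auto intro: has_vector_derivative_at_within\<close>)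
      then have "prim a g' x = g x - g a" by (simp add: prim_def integral_unique)
      moreover have "\<bar>F x - g x\<bar> < 1 / (real k + 1)" "\<bar>F a - g a\<bar> < 1 / (real k + 1)"
        using g(2) x ab by auto
      ultimately show ?thesis using Fa by simp
    qed
    moreover have "continuous_on {a..b} g'" by (rule continuous_on_polymonial_function[OF g'(1)])
    ultimately show ?thesis by blast
  qed
  then obtain fk where "\<And>k. continuous_on {a..b} (fk k) \<and> (\<forall>x\<in>{a..b}. \<bar>prim a (fk k) x - F x\<bar> \<le> 2 / (real k + 1))"
    by metis
  then show ?thesis using that by blast
qed



lemma prim_cont:
  fixes g :: "real \<Rightarrow> real"
  assumes "g absolutely_integrable_on {a..b}"
  shows "continuous_on {a..b} (prim a g)"
  using indefinite_integral_continuous_1[of g a b] assms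
  by (simp add: prim_def[abs_def] absolutely_integrable_on_def)

lemma conv_key:
  fixes a b m :: real and F :: "real \<Rightarrow> real" and h :: "real \<Rightarrow> real"
  assumes ab: "a \<le> b" and m: "0 < m" and Fc: "continuous_on {a..b} F"
    and h: "h absolutely_integrable_on {a..b}" and x: "x \<in> {a..b}"
  shows "\<bar>prim a (RL a m h) x - RL a m F x\<bar> \<le>
      (b - a) powr m / (m * Gamma m) * supnorm a b (\<lambda>x. prim a h x - F x)"
proof -
  define s where "s = supnorm a b (\<lambda>x. prim a h x - F x)"
  have pc: "continuous_on {a..b} (prim a h)" by (rule prim_cont[OF h])
  have Dc: "continuous_on {a..b} (\<lambda>x. prim a h x - F x)"
    by (intro continuous_intros pc Fc)
  have Dle: "\<bar>prim a h t - F t\<bar> \<le> s" if "t \<in> {a..b}" for t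
    unfolding s_def by (rule supnorm_ge_cont[OF Dc that])
  have s0: "0 \<le> s" using Dle[of a] ab by fastforce
  have sub: "{a..x} \<subseteq> {a..b}" using x by auto
  have hx: "h absolutely_integrable_on {a..x}"
    by (rule absolutely_integrable_on_subinterval[OF h sub])
  have ax: "a \<le> x" using x by auto
  have "prim a (RL a m h) x - RL a m F x = RL a m (prim a h) x - RL a m F x"
    using prim_RL[OF hx ax m] by simp
  also have "\<dots> = RL a m (\<lambda>t. prim a h t - F t) x"
    by (rule RL_diff[OF continuous_on_subset[OF pc sub] continuous_on_subset[OF Fc sub] ax m])
  finally have eq: "prim a (RL a m h) x - RL a m F x = RL a m (\<lambda>t. prim a h t - F t) x" .
  have "\<bar>RL a m (\<lambda>t. prim a h t - F t) x\<bar> \<le> s * (x - a) powr m / (m * Gamma m)"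
    by (rule RL_bound[OF continuous_on_subset[OF Dc sub] _ m ax]) (use Dle sub in auto)
  also have "\<dots> \<le> s * (b - a) powr m / (m * Gamma m)"
  proof -
    have "(x - a) powr m \<le> (b - a) powr m" using x m by (intro powr_mono2) auto
    then have "s * (x - a) powr m \<le> s * (b - a) powr m" using s0 by (rule mult_left_mono)
    moreover have "0 < m * Gamma m" using m by simp
    ultimately show ?thesis by (intro divide_right_mono) auto
  qed
  finally show ?thesis unfolding eq s_def by (simp add: algebra_simps)
qed

lemma HKJ_char:
  fixes a b m :: real and F :: "real \<Rightarrow> real"
  assumes ab: "a < b" and m: "0 < m" and F: "F \<in> C0 a b"
  shows "HKJ a b m F \<in> C0 a b \<and> (\<forall>x\<in>{a..b}. HKJ a b m F x = RL a m F x)"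
proof -
  have Fc: "continuous_on {a..b} F" and Fa: "F a = 0" using F by (auto simp: C0_def)
  define C where "C = (b - a) powr m / (m * Gamma m)"
  have C0: "0 \<le> C" using m by (simp add: C_def)
  obtain f0 where f0c: "\<And>k. continuous_on {a..b} (f0 k)"
    and f0b: "\<And>k x. x \<in> {a..b} \<Longrightarrow> \<bar>prim a (f0 k) x - F x\<bar> \<le> 2 / (real k + 1)"
    using approx_seq[of a b F] ab Fc Fa by auto
  have f0i: "f0 k absolutely_integrable_on {a..b}" for k
    by (rule absolutely_integrable_continuous_real[OF f0c])
  define s0 where "s0 = (\<lambda>k. supnorm a b (\<lambda>x. prim a (f0 k) x - F x))"
  have s0le: "s0 k \<le> 2 / (real k + 1)" for k
    unfolding s0_def by (rule supnorm_le) (use ab f0b in auto)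
  have s0ge: "0 \<le> s0 k" for k
  proof -
    have "\<bar>prim a (f0 k) a - F a\<bar> \<le> s0 k"
      unfolding s0_def by (rule supnorm_ge[OF f0b]) (use ab in auto)
    then show ?thesis by linarith
  qed
  have lim2: "(\<lambda>k. 2 / (real k + 1)) \<longlonglongrightarrow> 0"
    using LIMSEQ_Suc[OF lim_const_over_n[of "2::real"]] by (simp add: add.commute)
  have s0lim: "s0 \<longlonglongrightarrow> 0"
    by (rule Lim_null_comparison[OF _ lim2]) (use s0le s0ge in auto)
  define G0 where "G0 = (\<lambda>x. if x \<in> {a..b} then RL a m F x else 0)"
  have pRc: "continuous_on {a..b} (prim a (RL a m h))" if "h absolutely_integrable_on {a..b}" for h
    using indefinite_integral_continuous_1[OF RL_integrable[OF that m]]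
    by (simp add: prim_def[abs_def])
  have RLc: "continuous_on {a..b} (RL a m F)"
  proof (rule uniform_limit_theorem[where f="\<lambda>k. prim a (RL a m (f0 k))" and F=sequentially])
    show "\<forall>\<^sub>F k in sequentially. continuous_on {a..b} (prim a (RL a m (f0 k)))"
      using pRc[OF f0i] by simp
    show "uniform_limit {a..b} (\<lambda>k. prim a (RL a m (f0 k))) (RL a m F) sequentially"
    proof (rule uniform_limitI)
      fix e :: real assume e: "0 < e"
      have "(\<lambda>k. C * s0 k) \<longlonglongrightarrow> 0" by (rule tendsto_mult_right_zero[OF s0lim])
      from order_tendstoD(2)[OF this e]
      show "\<forall>\<^sub>F k in sequentially. \<forall>x\<in>{a..b}. dist (prim a (RL a m (f0 k)) x) (RL a m F x) < e"
      proof (rule eventually_mono)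
        fix k assume k: "C * s0 k < e"
        show "\<forall>x\<in>{a..b}. dist (prim a (RL a m (f0 k)) x) (RL a m F x) < e"
        proof
          fix x assume x: "x \<in> {a..b}"
          have "\<bar>prim a (RL a m (f0 k)) x - RL a m F x\<bar> \<le> C * s0 k"
            unfolding C_def s0_def by (rule conv_key[OF _ m Fc f0i x]) (use ab in auto)
          then show "dist (prim a (RL a m (f0 k)) x) (RL a m F x) < e"
            using k by (simp add: dist_real_def)
        qed
      qed
    qed
  qed simp
  have G0c: "continuous_on {a..b} G0"
    using RLc by (rule continuous_on_eq) (simp add: G0_def)
  have G0C: "G0 \<in> C0 a b" using G0c ab by (simp add: C0_def G0_def RL_def)
  have G0conv: "(\<lambda>k. supnorm a b (\<lambda>x. prim a (RL a m (fk k)) x - G0 x)) \<longlonglongrightarrow> 0"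
    if fki: "\<And>k. fk k absolutely_integrable_on {a..b}"
      and fkl: "(\<lambda>k. supnorm a b (\<lambda>x. prim a (fk k) x - F x)) \<longlonglongrightarrow> 0" for fk
  proof (rule Lim_null_comparison[OF _ tendsto_mult_right_zero[OF fkl, of C]])
    show "\<forall>\<^sub>F k in sequentially. norm (supnorm a b (\<lambda>x. prim a (RL a m (fk k)) x - G0 x))
        \<le> C * supnorm a b (\<lambda>x. prim a (fk k) x - F x)"
    proof (rule always_eventually, rule allI)
      fix k
      have bnd: "\<bar>prim a (RL a m (fk k)) x - G0 x\<bar> \<le> C * supnorm a b (\<lambda>x. prim a (fk k) x - F x)"
        if x: "x \<in> {a..b}" for x
        using conv_key[OF _ m Fc fki x] ab x by (simp add: C_def G0_def)
      have "0 \<le> supnorm a b (\<lambda>x. prim a (RL a m (fk k)) x - G0 x)"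
        using supnorm_ge[OF bnd, of a] ab by fastforce
      moreover have "supnorm a b (\<lambda>x. prim a (RL a m (fk k)) x - G0 x) \<le> C * supnorm a b (\<lambda>x. prim a (fk k) x - F x)"
        by (rule supnorm_le) (use ab bnd in auto)
      ultimately show "norm (supnorm a b (\<lambda>x. prim a (RL a m (fk k)) x - G0 x))
        \<le> C * supnorm a b (\<lambda>x. prim a (fk k) x - F x)" by simp
    qed
  qed
  define P where "P = (\<lambda>G. G \<in> C0 a b \<and> (\<forall>x. x \<notin> {a..b} \<longrightarrow> G x = 0) \<and>
     (\<forall>fk :: nat \<Rightarrow> real \<Rightarrow> real.
        (\<forall>k. fk k absolutely_integrable_on {a..b}) \<and>
        (\<lambda>k. supnorm a b (\<lambda>x. prim a (fk k) x - F x)) \<longlonglongrightarrow> 0 \<longrightarrow>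
        (\<lambda>k. supnorm a b (\<lambda>x. prim a (RL a m (fk k)) x - G x)) \<longlonglongrightarrow> 0))"
  have PG0: "P G0" unfolding P_def using G0C G0conv by (auto simp: G0_def)
  have uniq: "G = G0" if PG: "P G" for G
  proof
    fix x
    show "G x = G0 x"
    proof cases
      assume x: "x \<in> {a..b}"
      have Gc: "continuous_on {a..b} G" using PG by (simp add: P_def C0_def)
      define d where "d = (\<lambda>k. supnorm a b (\<lambda>x. prim a (RL a m (f0 k)) x - G x))"
      define e where "e = (\<lambda>k. supnorm a b (\<lambda>x. prim a (RL a m (f0 k)) x - G0 x))"
      have dl: "d \<longlonglongrightarrow> 0" using PG f0i s0lim unfolding P_def d_def s0_def by blast
      have el: "e \<longlonglongrightarrow> 0" unfolding e_def by (rule G0conv[OF f0i s0lim[unfolded s0_def]])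
      have "\<bar>G x - G0 x\<bar> \<le> d k + e k" for k
      proof -
        have "\<bar>prim a (RL a m (f0 k)) x - G x\<bar> \<le> d k"
          unfolding d_def by (rule supnorm_ge_cont[OF _ x]) (intro continuous_intros pRc f0i Gc)
        moreover have "\<bar>prim a (RL a m (f0 k)) x - G0 x\<bar> \<le> e k"
          unfolding e_def by (rule supnorm_ge_cont[OF _ x]) (intro continuous_intros pRc f0i G0c)
        ultimately show ?thesis by linarith
      qed
      then have "\<bar>G x - G0 x\<bar> \<le> 0"
        using LIMSEQ_le_const[OF tendsto_add_zero[OF dl el]] by blast
      then show ?thesis by simp
    next
      assume x: "x \<notin> {a..b}"
      then show ?thesis using PG by (auto simp add: P_def G0_def)
    qed
  qed
  have "HKJ a b m F = G0"
    unfolding HKJ_def using the_equality[of P G0, OF PG0 uniq] by (simp add: P_def)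
  then show ?thesis using G0C by (simp add: G0_def)
qed



lemma zero_from_integrals:
  fixes D :: "real \<Rightarrow> real"
  assumes ab: "a < b" and Dc: "continuous_on {a..b} D"
    and I: "\<And>y. y \<in> {a..b} \<Longrightarrow> integral {a..y} D = 0" and x: "x \<in> {a..b}"
  shows "D x = 0"
proof -
  have 1: "((\<lambda>u. integral {a..u} D) has_vector_derivative D x) (at x within {a..b})"
    by (rule integral_has_vector_derivative[OF Dc x])
  have 2: "((\<lambda>u. integral {a..u} D) has_vector_derivative 0) (at x within {a..b})"
    by (rule has_vector_derivative_transform[OF x _ has_vector_derivative_const]) (use I in auto)
  show ?thesis
    using vector_derivative_unique_within_closed_interval[of a b x, OF ab _ 1[unfolded box_real(2)[symmetric]] 2[unfolded box_real(2)[symmetric]]] x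
    by simp
qed

theorem theorem5p1:
  fixes a b n :: real and F :: "real \<Rightarrow> real"
  assumes "a < b" and "0 < n" and "n < 1" and "F \<in> C0 a b"
  shows "(\<exists>\<Phi>\<in>C0 a b. \<forall>x\<in>{a..b}. HKJ a b n \<Phi> x = F x) \<longleftrightarrow>
         (\<exists>g. continuous_on {a..b} g \<and> g a = 0 \<and>
              (\<forall>x\<in>{a..b}. HKJ a b (1 - n) F x = integral {a..x} g))"
proof -
  note ab = assms(1)
  have n1: "0 < 1 - n" using assms by simp
  have Fc: "continuous_on {a..b} F" using assms(4) by (simp add: C0_def)
  have Fx: "F absolutely_integrable_on {a..x}" if "x \<in> {a..b}" for x
    by (rule absolutely_integrable_continuous_real, rule continuous_on_subset[OF Fc]) (use that in auto)
  have HF: "\<forall>x\<in>{a..b}. HKJ a b (1 - n) F x = RL a (1 - n) F x"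
    using HKJ_char[OF ab n1 assms(4)] by blast
  show ?thesis
  proof
    assume "\<exists>\<Phi>\<in>C0 a b. \<forall>x\<in>{a..b}. HKJ a b n \<Phi> x = F x"
    then obtain \<Phi> where P: "\<Phi> \<in> C0 a b" and PF: "\<forall>x\<in>{a..b}. HKJ a b n \<Phi> x = F x" by blast
    have Pc: "continuous_on {a..b} \<Phi>" and Pa: "\<Phi> a = 0" using P by (auto simp: C0_def)
    have RP: "RL a n \<Phi> x = F x" if "x \<in> {a..b}" for x
      using HKJ_char[OF ab assms(2) P] PF that by auto
    have "HKJ a b (1 - n) F x = integral {a..x} \<Phi>" if x: "x \<in> {a..b}" for x
    proof -
      have Px: "\<Phi> absolutely_integrable_on {a..x}"
        by (rule absolutely_integrable_continuous_real, rule continuous_on_subset[OF Pc]) (use x in auto)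
      have "HKJ a b (1 - n) F x = RL a (1 - n) F x" using HF x by blast
      also have "\<dots> = RL a (1 - n) (RL a n \<Phi>) x"
        unfolding RL_def[of a "1 - n" _ x] by (rule arg_cong[where f="\<lambda>u. _ * u"], rule integral_cong) (use RP x in simp)
      also have "\<dots> = RL a (1 - n + n) \<Phi> x"
        by (rule RL_semigroup[OF Px n1 assms(2)]) simp
      also have "\<dots> = integral {a..x} \<Phi>" using RL1[of a x \<Phi>] x by simp
      finally show ?thesis .
    qed
    then show "\<exists>g. continuous_on {a..b} g \<and> g a = 0 \<and>
              (\<forall>x\<in>{a..b}. HKJ a b (1 - n) F x = integral {a..x} g)"
      using Pc Pa by blast
  next
    assume "\<exists>g. continuous_on {a..b} g \<and> g a = 0 \<and>
              (\<forall>x\<in>{a..b}. HKJ a b (1 - n) F x = integral {a..x} g)"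
    then obtain g where gc: "continuous_on {a..b} g" and ga: "g a = 0"
      and gF: "\<forall>x\<in>{a..b}. HKJ a b (1 - n) F x = integral {a..x} g" by blast
    have gC: "g \<in> C0 a b" using gc ga by (simp add: C0_def)
    have Hg: "HKJ a b n g \<in> C0 a b" "\<forall>x\<in>{a..b}. HKJ a b n g x = RL a n g x"
      using HKJ_char[OF ab assms(2) gC] by blast+
    have RLc: "continuous_on {a..b} (RL a n g)"
      using Hg by (auto simp: C0_def intro: continuous_on_eq)
    have Ieq: "integral {a..y} (\<lambda>t. RL a n g t - F t) = 0" if y: "y \<in> {a..b}" for y
    proof -
      have sub: "{a..y} \<subseteq> {a..b}" using y by auto
      have gy: "g absolutely_integrable_on {a..y}"
        by (rule absolutely_integrable_continuous_real, rule continuous_on_subset[OF gc sub])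
      have ay: "a \<le> y" using y by auto
      have "integral {a..y} (RL a n g) = prim a (RL a n g) y" by (simp add: prim_def)
      also have "\<dots> = RL a n (prim a g) y" by (rule prim_RL[OF gy ay assms(2)])
      also have "\<dots> = RL a n (RL a (1 - n) F) y"
        unfolding RL_def[of a n _ y]
        by (rule arg_cong[where f="\<lambda>u. _ * u"], rule integral_cong) (use gF HF sub in \<open>auto simp: prim_def\<close>)
      also have "\<dots> = RL a (n + (1 - n)) F y"
        by (rule RL_semigroup[OF Fx[OF y] assms(2) n1]) simp
      also have "\<dots> = integral {a..y} F" using RL1[OF ay] by simp
      finally have e: "integral {a..y} (RL a n g) = integral {a..y} F" .
      have i1: "RL a n g integrable_on {a..y}"
        by (rule integrable_continuous_real, rule continuous_on_subset[OF RLc sub])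
      have i2: "F integrable_on {a..y}"
        by (rule integrable_continuous_real, rule continuous_on_subset[OF Fc sub])
      show ?thesis using integral_diff[OF i1 i2] e by simp
    qed
    have "HKJ a b n g x = F x" if x: "x \<in> {a..b}" for x
    proof -
      have "RL a n g x - F x = 0"
        using zero_from_integrals[OF ab _ Ieq x] continuous_on_diff[OF RLc Fc] by blast
      then show ?thesis using Hg(2) x by simp
    qed
    then show "\<exists>\<Phi>\<in>C0 a b. \<forall>x\<in>{a..b}. HKJ a b n \<Phi> x = F x" using gC by blast
  qed
qed

end
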